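(* Let $1\le k\le n$, $c\in\mathrm{GRS}(\alpha,u,k)$, $e\in\mathbb{E}^n$ of Hamming weight $t\le\lfloor (n-k)/2\rfloor$, and $r=c+e$. Run the following procedure on $r$: D1–D2: set $A\leftarrow0$, $B\leftarrow\eta$, $C\leftarrow1$, $D\leftarrow -h_{r'}$. D3: if $\deg C+k-1\ge\deg D$, go to D6. D4: set $d\leftarrow\deg D-\deg B$ and $\gamma\leftarrow\mathrm{LC}(D)\mathrm{LC}(B)^{-1}$. D5: if $d\ge0$, set $C\leftarrow C-\gamma x^dA$, $D\leftarrow D-\gamma x^dB$; if $d<0$, simultaneously set $(A,B,C,D)\leftarrow(C,\ D,\ x^{-d}C-\gamma A,\ x^{-d}D-\gamma B)$ (using the old values on the right). Return to D3. D6: output $(u_1P(\alpha_1),\dots,u_nP(\alpha_n))$ where $P=-D/C$. Then the procedure terminates, at termination $C$ divides $D$ in $\mathbb{E}[x]$, $-D/C$ is the polynomial $h_{c'}$ of degree $<k$ with $c=(u_1h_{c'}(\alpha_1),\dots,u_nh_{c'}(\alpha_n))$, and the output equals $c$.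
   Context: $\mathbb{E}$ is a finite field, $\alpha_1,\dots,\alpha_n\in\mathbb{E}$ pairwise distinct, $u_1,\dots,u_n\in\mathbb{E}$ nonzero. $\mathrm{GRS}(\alpha,u,k)=\{(u_1f(\alpha_1),\dots,u_nf(\alpha_n)) : f\in\mathbb{E}[x],\ \deg f<k\}$. For $1\le i\le n$, $\tilde h_i=\prod_{j\ne i}(x-\alpha_j)$, $h_i=\tilde h_i(\alpha_i)^{-1}\tilde h_i$; $h_{r'}=\sum_{i=1}^n r_iu_i^{-1}h_i$ and $\eta=\prod_{i=1}^n(x-\alpha_i)$. $\deg$ is degree in $x$ with $\deg0=-\infty$; $\mathrm{LC}$ denotes leading coefficient. *)

theory Defs
  imports "HOL-Computational_Algebra.Polynomial" "HOL-Library.Extended_Real"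
begin

text \<open>Vectors in E^n are functions nat => 'a, only indices i < n matter.\<close>

definition GRS :: "(nat \<Rightarrow> 'a::field) \<Rightarrow> (nat \<Rightarrow> 'a) \<Rightarrow> nat \<Rightarrow> nat \<Rightarrow> (nat \<Rightarrow> 'a) set" where
  "GRS \<alpha> u n k = {v. \<exists>f. degree f < k \<and> (\<forall>i<n. v i = u i * poly f (\<alpha> i))}"

definition hweight :: "nat \<Rightarrow> (nat \<Rightarrow> 'a::zero) \<Rightarrow> nat" where
  "hweight n e = card {i. i < n \<and> e i \<noteq> 0}"

definition htilde :: "(nat \<Rightarrow> 'a::field) \<Rightarrow> nat \<Rightarrow> nat \<Rightarrow> 'a poly" where
  "htilde \<alpha> n i = (\<Prod>j\<in>{0..<n} - {i}. [:- \<alpha> j, 1:])"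

definition hbasis :: "(nat \<Rightarrow> 'a::field) \<Rightarrow> nat \<Rightarrow> nat \<Rightarrow> 'a poly" where
  "hbasis \<alpha> n i = smult (inverse (poly (htilde \<alpha> n i) (\<alpha> i))) (htilde \<alpha> n i)"

definition hvec :: "(nat \<Rightarrow> 'a::field) \<Rightarrow> (nat \<Rightarrow> 'a) \<Rightarrow> nat \<Rightarrow> (nat \<Rightarrow> 'a) \<Rightarrow> 'a poly" where
  "hvec \<alpha> u n r = (\<Sum>i<n. smult (r i * inverse (u i)) (hbasis \<alpha> n i))"

definition eta :: "(nat \<Rightarrow> 'a::field) \<Rightarrow> nat \<Rightarrow> 'a poly" where
  "eta \<alpha> n = (\<Prod>i<n. [:- \<alpha> i, 1:])"

definition pdeg :: "'a::zero poly \<Rightarrow> ereal" where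
  "pdeg p = (if p = 0 then -\<infinity> else ereal (real (degree p)))"

type_synonym 'a dstate = "'a poly \<times> 'a poly \<times> 'a poly \<times> 'a poly"

definition dinit :: "(nat \<Rightarrow> 'a::field) \<Rightarrow> (nat \<Rightarrow> 'a) \<Rightarrow> nat \<Rightarrow> (nat \<Rightarrow> 'a) \<Rightarrow> 'a dstate" where
  "dinit \<alpha> u n r = (0, eta \<alpha> n, 1, - hvec \<alpha> u n r)"

definition dstop :: "nat \<Rightarrow> 'a::field dstate \<Rightarrow> bool" where
  "dstop k s = (case s of (A, B, C, D) \<Rightarrow> pdeg C + ereal (real k) - 1 \<ge> pdeg D)"

definition dstep :: "'a::field dstate \<Rightarrow> 'a dstate" where
  "dstep s = (case s of (A, B, C, D) \<Rightarrow>
     (let d = int (degree D) - int (degree B);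
          \<gamma> = lead_coeff D * inverse (lead_coeff B)
      in if d \<ge> 0 then
           (A, B, C - smult \<gamma> (monom 1 (nat d) * A), D - smult \<gamma> (monom 1 (nat d) * B))
         else
           (C, D, monom 1 (nat (- d)) * C - smult \<gamma> A, monom 1 (nat (- d)) * D - smult \<gamma> B)))"

definition dstate_at :: "(nat \<Rightarrow> 'a::field) \<Rightarrow> (nat \<Rightarrow> 'a) \<Rightarrow> nat \<Rightarrow> (nat \<Rightarrow> 'a) \<Rightarrow> nat \<Rightarrow> 'a dstate" where
  "dstate_at \<alpha> u n r j = (dstep ^^ j) (dinit \<alpha> u n r)"

end

theory Submission
  imports Defs
begin

lemma deg_diff_left: "degree (q::'a::ab_group_add poly) < degree p \<Longrightarrow> degree (p - q) = degree p"
  using degree_add_eq_left[of "-q" p] by simp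

lemma cancel_deg:
  fixes p q :: "'a::field poly"
  assumes "degree p \<le> m" "degree q \<le> m" "coeff p m = coeff q m"
  shows "p - q = 0 \<or> degree (p - q) < m"
proof (rule ccontr)
  assume "\<not> ?thesis"
  hence nz: "p - q \<noteq> 0" and "degree (p - q) \<ge> m" by auto
  moreover have "degree (p - q) \<le> m" using assms degree_diff_le by blast
  ultimately have "degree (p - q) = m" by simp
  moreover have "coeff (p - q) m = 0" using assms(3) by (simp only: coeff_diff) simp
  ultimately show False using nz leading_coeff_0_iff by metis
qed

lemma roots_card:
  fixes p :: "'a::field poly"
  assumes "p \<noteq> 0" "inj_on \<alpha> S" "finite S" "\<forall>i\<in>S. poly p (\<alpha> i) = 0"
  shows "card S \<le> degree p"
proof -
  have "card S = card (\<alpha> ` S)" using assms card_image by metis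
  also have "\<dots> \<le> card {x. poly p x = 0}"
    by (rule card_mono) (use assms poly_roots_finite in auto)
  also have "\<dots> \<le> degree p" by (rule card_poly_roots_bound[OF assms(1)])
  finally show ?thesis .
qed

lemma htilde_at:
  assumes "inj_on \<alpha> {0..<n}" "i < n" "j < n"
  shows "poly (htilde \<alpha> n i) (\<alpha> j) = 0 \<longleftrightarrow> i \<noteq> j"
proof -
  have "poly (htilde \<alpha> n i) (\<alpha> j) = (\<Prod>l\<in>{0..<n} - {i}. \<alpha> j - \<alpha> l)"
    unfolding htilde_def poly_prod by simp
  also have "\<dots> = 0 \<longleftrightarrow> (\<exists>l\<in>{0..<n} - {i}. \<alpha> j = \<alpha> l)" by simp
  also have "\<dots> \<longleftrightarrow> i \<noteq> j" using assms by (auto dest: inj_onD)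
  finally show ?thesis .
qed

lemma hbasis_at:
  assumes "inj_on \<alpha> {0..<n}" "i < n" "j < n"
  shows "poly (hbasis \<alpha> n i) (\<alpha> j) = (if i = j then 1 else 0)"
  using htilde_at[OF assms] htilde_at[OF assms(1,2,2)]
  by (auto simp: hbasis_def)

lemma degree_htilde: "i < n \<Longrightarrow> degree (htilde \<alpha> n i) \<le> n - 1"
proof -
  assume "i < n"
  have "degree (htilde \<alpha> n i) \<le> (\<Sum>j\<in>{0..<n} - {i}. degree [:- \<alpha> j, 1:])"
    unfolding htilde_def using degree_prod_sum_le[of "{0..<n} - {i}" "\<lambda>j. [:- \<alpha> j, 1:]"] by (simp add: o_def)
  also have "\<dots> = n - 1" using \<open>i < n\<close> by simp
  finally show ?thesis .
qed

lemma hvec_at: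
  assumes "inj_on \<alpha> {0..<n}" "j < n"
  shows "poly (hvec \<alpha> u n v) (\<alpha> j) = v j * inverse (u j)"
proof -
  have "poly (hvec \<alpha> u n v) (\<alpha> j) = (\<Sum>i<n. v i * inverse (u i) * (if i = j then 1 else 0))"
    unfolding hvec_def poly_sum poly_smult
    by (rule sum.cong) (use assms hbasis_at[OF assms(1) _ assms(2)] in auto)
  also have "\<dots> = v j * inverse (u j)" using assms(2)
    by (simp add: if_distrib sum.delta' cong: if_cong)
  finally show ?thesis .
qed

lemma degree_hvec:
  assumes "n \<ge> 1" shows "degree (hvec \<alpha> u n v) < n"
proof -
  have "degree (hvec \<alpha> u n v) \<le> n - 1"
    unfolding hvec_def
  proof (rule degree_sum_le)
    fix i assume "i \<in> {..<n}"
    thus "degree (smult (v i * inverse (u i)) (hbasis \<alpha> n i)) \<le> n - 1"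
      using degree_htilde[of i n \<alpha>] by (simp add: hbasis_def)
  qed simp
  thus ?thesis using assms by simp
qed

definition dinv :: "(nat \<Rightarrow> 'a::field) \<Rightarrow> nat \<Rightarrow> nat \<Rightarrow> (nat \<Rightarrow> 'a) \<Rightarrow> 'a dstate \<Rightarrow> bool" where
  "dinv \<alpha> n t w s = (case s of (A, B, C, D) \<Rightarrow>
     B \<noteq> 0 \<and> C \<noteq> 0 \<and> degree C + degree B = n \<and> (A = 0 \<or> degree A < degree C) \<and>
     (A = 0 \<or> D = 0 \<or> degree A + degree D < n) \<and>
     (\<forall>i<n. poly D (\<alpha> i) = - w i * poly C (\<alpha> i) \<and> poly B (\<alpha> i) = - w i * poly A (\<alpha> i)) \<and>
     degree C \<le> t)"

definition dmeas :: "'a::field dstate \<Rightarrow> nat" where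
  "dmeas s = (case s of (A, B, C, D) \<Rightarrow> degree B + degree D + (if D = 0 then 0 else 1))"

locale dsetup =
  fixes \<alpha> :: "nat \<Rightarrow> 'a::field" and n k t :: nat and w :: "nat \<Rightarrow> 'a" and f :: "'a poly" and G :: "nat set"
  assumes k1: "1 \<le> k" and tb: "2 * t + k \<le> n" and fk: "degree f < k"
    and Gsub: "G \<subseteq> {0..<n}" and Ginj: "inj_on \<alpha> G" and Gcard: "card G = n - t"
    and Gw: "\<forall>i\<in>G. w i = poly f (\<alpha> i)"
begin

lemma good_vanish:
  assumes "dinv \<alpha> n t w (A, B, C, D)" "i \<in> G"
  shows "poly (D + f * C) (\<alpha> i) = 0"
proof -
  have "i < n" using Gsub assms by auto
  hence "poly D (\<alpha> i) = - w i * poly C (\<alpha> i)" using assms(1) unfolding dinv_def by auto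
  thus ?thesis using Gw assms(2) by simp
qed

lemma low:
  assumes "p \<noteq> 0" "\<forall>i\<in>G. poly p (\<alpha> i) = 0"
  shows "n - t \<le> degree p"
  using roots_card[OF assms(1) Ginj _ assms(2)] Gsub Gcard finite_subset by fastforce

lemma nonstop:
  assumes "dinv \<alpha> n t w (A, B, C, D)" "\<not> dstop k (A, B, C, D)"
  shows "D \<noteq> 0" "degree C + k \<le> degree D" "n - t \<le> degree D"
proof -
  have C: "C \<noteq> 0" using assms unfolding dinv_def by auto
  show D: "D \<noteq> 0" using assms(2) C unfolding dstop_def pdeg_def by auto
  show dd: "degree C + k \<le> degree D" using assms(2) C D k1 unfolding dstop_def pdeg_def
    by (auto simp: one_ereal_def)
  have "degree (f * C) < degree D"
    using degree_mult_le[of f C] fk dd by linarith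
  hence "degree (D + f * C) = degree D" by (rule degree_add_eq_left)
  moreover have "D + f * C \<noteq> 0"
  proof
    assume "D + f * C = 0"
    hence "D = - (f * C)" by (simp add: eq_neg_iff_add_eq_0)
    thus False using \<open>degree (f * C) < degree D\<close> by simp
  qed
  ultimately show "n - t \<le> degree D" using low good_vanish[OF assms(1)] by metis
qed

lemma final:
  assumes "dinv \<alpha> n t w (A, B, C, D)" "dstop k (A, B, C, D)"
  shows "D = - (f * C)" "C \<noteq> 0"
proof -
  show C: "C \<noteq> 0" using assms unfolding dinv_def by auto
  have ct: "degree C \<le> t" using assms unfolding dinv_def by auto
  have dd: "D = 0 \<or> degree D \<le> degree C + k - 1" using assms(2) C k1 unfolding dstop_def pdeg_def
    by (auto simp: one_ereal_def split: if_splits)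
  have "degree (f * C) \<le> degree C + k - 1"
    using degree_mult_le[of f C] fk by linarith
  hence "degree (D + f * C) \<le> degree C + k - 1" using dd
    by (metis add_0 degree_add_le)
  hence "degree (D + f * C) < n - t" using ct tb k1 by linarith
  hence "D + f * C = 0" using low good_vanish[OF assms(1)] by (meson not_le)
  thus "D = - (f * C)" by (simp add: eq_neg_iff_add_eq_0)
qed

lemma step:
  assumes inv: "dinv \<alpha> n t w (A, B, C, D)" and ns: "\<not> dstop k (A, B, C, D)"
  shows "dinv \<alpha> n t w (dstep (A, B, C, D)) \<and> dmeas (dstep (A, B, C, D)) < dmeas (A, B, C, D)"
proof -
  from inv have B0: "B \<noteq> 0" and C0: "C \<noteq> 0" and dCB: "degree C + degree B = n"
    and I2: "A = 0 \<or> degree A < degree C" and I3: "A = 0 \<or> D = 0 \<or> degree A + degree D < n"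
    and pw: "\<forall>i<n. poly D (\<alpha> i) = - w i * poly C (\<alpha> i) \<and> poly B (\<alpha> i) = - w i * poly A (\<alpha> i)"
    and ct: "degree C \<le> t"
    unfolding dinv_def by auto
  have D0: "D \<noteq> 0" and dD: "degree C + k \<le> degree D" and dDt: "n - t \<le> degree D"
    using nonstop[OF inv ns] by auto
  define \<gamma> where "\<gamma> = lead_coeff D * inverse (lead_coeff B)"
  have lcB: "lead_coeff B \<noteq> 0" using B0 by simp
  have \<gamma>B: "\<gamma> * lead_coeff B = lead_coeff D" unfolding \<gamma>_def using lcB by simp
  show ?thesis
  proof (cases "degree B \<le> degree D")
    case True
    define d where "d = degree D - degree B"
    define C' where "C' = C - smult \<gamma> (monom 1 d * A)"
    define D' where "D' = D - smult \<gamma> (monom 1 d * B)"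
    have st: "dstep (A, B, C, D) = (A, B, C', D')"
      unfolding dstep_def C'_def D'_def d_def \<gamma>_def using True by (simp add: Let_def nat_diff_distrib)
    have degmB: "degree (monom 1 d * B) = degree D"
      using B0 True by (simp add: degree_mult_eq degree_monom_eq d_def)
    have "D' = 0 \<or> degree D' < degree D"
      unfolding D'_def
    proof (rule cancel_deg)
      show "degree (smult \<gamma> (monom 1 d * B)) \<le> degree D" using degmB degree_smult_le by metis
      show "coeff D (degree D) = coeff (smult \<gamma> (monom 1 d * B)) (degree D)"
        using \<gamma>B True by (simp add: coeff_monom_mult d_def)
    qed simp
    hence D'm: "D' = 0 \<or> degree D' < degree D" .
    have C'eq: "degree C' = degree C \<and> C' \<noteq> 0"
    proof (cases "A = 0")
      case True thus ?thesis using C0 by (simp add: C'_def)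
    next
      case False
      hence "degree A + degree D < n" using I3 D0 by auto
      hence lt: "d + degree A < degree C" using dCB True unfolding d_def by linarith
      have "degree (smult \<gamma> (monom 1 d * A)) \<le> d + degree A"
        by (metis degree_smult_le degree_mult_le degree_monom_le add_le_mono order_trans le_refl)
      hence "degree (smult \<gamma> (monom 1 d * A)) < degree C" using lt by linarith
      hence "degree C' = degree C" unfolding C'_def by (rule deg_diff_left)
      moreover have "C' \<noteq> 0"
      proof
        assume "C' = 0"
        hence "C = smult \<gamma> (monom 1 d * A)" unfolding C'_def by simp
        thus False using \<open>degree (smult \<gamma> (monom 1 d * A)) < degree C\<close> by simp
      qed
      ultimately show ?thesis by simp
    qed
    have "dinv \<alpha> n t w (A, B, C', D')"
      unfolding dinv_def
    proof (simp only: prod.case, intro conjI)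
      show "B \<noteq> 0" "C' \<noteq> 0" "degree C' + degree B = n" "degree C' \<le> t"
        using B0 C'eq dCB ct by auto
      show "A = 0 \<or> degree A < degree C'" using I2 C'eq by auto
      show "A = 0 \<or> D' = 0 \<or> degree A + degree D' < n" using I3 D'm by auto
      show "\<forall>i<n. poly D' (\<alpha> i) = - w i * poly C' (\<alpha> i) \<and> poly B (\<alpha> i) = - w i * poly A (\<alpha> i)"
        using pw by (simp add: C'_def D'_def poly_monom algebra_simps)
    qed
    moreover have "dmeas (A, B, C', D') < dmeas (A, B, C, D)"
      using D'm D0 unfolding dmeas_def by auto
    ultimately show ?thesis using st by simp
  next
    case False
    define s where "s = degree B - degree D"
    define C' where "C' = monom 1 s * C - smult \<gamma> A"
    define D' where "D' = monom 1 s * D - smult \<gamma> B"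
    have st: "dstep (A, B, C, D) = (C, D, C', D')"
      unfolding dstep_def C'_def D'_def s_def \<gamma>_def using False by (simp add: Let_def nat_diff_distrib)
    have s0: "s > 0" using False s_def by simp
    have degmD: "degree (monom 1 s * D) = degree B"
      using D0 False by (simp add: degree_mult_eq degree_monom_eq s_def)
    have "D' = 0 \<or> degree D' < degree B"
      unfolding D'_def
    proof (rule cancel_deg)
      show "degree (smult \<gamma> B) \<le> degree B" by (rule degree_smult_le)
      show "coeff (monom 1 s * D) (degree B) = coeff (smult \<gamma> B) (degree B)"
        using \<gamma>B False by (simp add: coeff_monom_mult s_def)
    qed (simp add: degmD)
    hence D'm: "D' = 0 \<or> degree D' < degree B" .
    have degmC: "degree (monom 1 s * C) = s + degree C"
      using C0 by (simp add: degree_mult_eq degree_monom_eq)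
    have "degree (smult \<gamma> A) < degree (monom 1 s * C)"
      using I2 s0 degmC degree_smult_le[of \<gamma> A] by auto
    hence dC': "degree C' = s + degree C" unfolding C'_def using deg_diff_left degmC by metis
    have C'0: "C' \<noteq> 0" using dC' s0 by (metis add_gr_0 degree_0 less_numeral_extra(3))
    have "dinv \<alpha> n t w (C, D, C', D')"
      unfolding dinv_def
    proof (simp only: prod.case, intro conjI)
      show "D \<noteq> 0" "C' \<noteq> 0" using D0 C'0 by auto
      show "degree C' + degree D = n" using dC' dCB False s_def by linarith
      show "degree C' \<le> t" using dC' dCB False s_def dDt ct tb by linarith
      show "C = 0 \<or> degree C < degree C'" using dC' s0 by auto
      show "C = 0 \<or> D' = 0 \<or> degree C + degree D' < n" using D'm dCB by auto
      show "\<forall>i<n. poly D' (\<alpha> i) = - w i * poly C' (\<alpha> i) \<and> poly D (\<alpha> i) = - w i * poly C (\<alpha> i)"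
        using pw by (simp add: C'_def D'_def poly_monom algebra_simps)
    qed
    moreover have "dmeas (C, D, C', D') < dmeas (A, B, C, D)"
      using D'm D0 False unfolding dmeas_def by auto
    ultimately show ?thesis using st by simp
  qed
qed

lemma run:
  "dinv \<alpha> n t w s \<Longrightarrow> \<exists>m. (\<forall>j\<le>m. dinv \<alpha> n t w ((dstep ^^ j) s)) \<and> dstop k ((dstep ^^ m) s)
      \<and> (\<forall>j<m. \<not> dstop k ((dstep ^^ j) s))"
proof (induction "dmeas s" arbitrary: s rule: less_induct)
  case less
  show ?case
  proof (cases "dstop k s")
    case True
    thus ?thesis using less.prems by (intro exI[of _ 0]) auto
  next
    case False
    obtain A B C D where s: "s = (A, B, C, D)" by (cases s) auto
    have st: "dinv \<alpha> n t w (dstep s) \<and> dmeas (dstep s) < dmeas s"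
      using step less.prems False unfolding s by blast
    then obtain m where m: "\<forall>j\<le>m. dinv \<alpha> n t w ((dstep ^^ j) (dstep s))"
      "dstop k ((dstep ^^ m) (dstep s))" "\<forall>j<m. \<not> dstop k ((dstep ^^ j) (dstep s))"
      using less.hyps by blast
    have "\<forall>j\<le>Suc m. dinv \<alpha> n t w ((dstep ^^ j) s)"
    proof (intro allI impI)
      fix j assume "j \<le> Suc m"
      thus "dinv \<alpha> n t w ((dstep ^^ j) s)"
        using m(1) less.prems by (cases j) (auto simp: funpow_Suc_right simp del: funpow.simps)
    qed
    moreover have "\<forall>j<Suc m. \<not> dstop k ((dstep ^^ j) s)"
    proof (intro allI impI)
      fix j assume "j < Suc m"
      thus "\<not> dstop k ((dstep ^^ j) s)"
        using m(3) False by (cases j) (auto simp: funpow_Suc_right simp del: funpow.simps)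
    qed
    moreover have "dstop k ((dstep ^^ Suc m) s)" using m(2) by (simp add: funpow_Suc_right del: funpow.simps)
    ultimately show ?thesis by blast
  qed
qed

end


lemma eta_facts:
  "eta \<alpha> n \<noteq> 0" "degree (eta \<alpha> n) = n" "\<forall>i<n. poly (eta \<alpha> n) (\<alpha> i) = 0"
proof -
  show "eta \<alpha> n \<noteq> 0" unfolding eta_def by (simp add: prod_zero_iff)
  have "degree (eta \<alpha> n) = (\<Sum>i<n. degree [:- \<alpha> i, 1:])"
    unfolding eta_def by (rule degree_prod_eq_sum_degree) simp
  thus "degree (eta \<alpha> n) = n" by simp
  show "\<forall>i<n. poly (eta \<alpha> n) (\<alpha> i) = 0"
    unfolding eta_def poly_prod by (auto simp: prod_zero_iff)
qed

theorem mainTheorem6: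
  fixes \<alpha> u c e :: "nat \<Rightarrow> 'a::{field,finite}" and n k :: nat
  assumes "inj_on \<alpha> {0..<n}"
    and "\<forall>i<n. u i \<noteq> 0"
    and "1 \<le> k" and "k \<le> n"
    and "c \<in> GRS \<alpha> u n k"
    and "hweight n e \<le> (n - k) div 2"
    and "r = (\<lambda>i. c i + e i)"
  shows "\<exists>m A B C D.
           dstate_at \<alpha> u n r m = (A, B, C, D) \<and>
           dstop k (dstate_at \<alpha> u n r m) \<and>
           (\<forall>j<m. \<not> dstop k (dstate_at \<alpha> u n r j) \<and> fst (snd (dstate_at \<alpha> u n r j)) \<noteq> 0) \<and>
           C dvd D \<and>
           - (D div C) = hvec \<alpha> u n c \<and>
           degree (hvec \<alpha> u n c) < k \<and>
           (\<forall>i<n. c i = u i * poly (hvec \<alpha> u n c) (\<alpha> i)) \<and>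
           (\<forall>i<n. u i * poly (- (D div C)) (\<alpha> i) = c i)"
proof -
  have n1: "n \<ge> 1" using assms by simp
  obtain f where fk: "degree f < k" and cf: "\<forall>i<n. c i = u i * poly f (\<alpha> i)"
    using assms(5) unfolding GRS_def by blast
  have hc: "hvec \<alpha> u n c = f"
  proof (rule ccontr)
    assume ne: "hvec \<alpha> u n c \<noteq> f"
    define g where "g = hvec \<alpha> u n c - f"
    have g0: "g \<noteq> 0" using ne unfolding g_def by simp
    have "degree g < n" unfolding g_def
      using degree_hvec[OF n1] fk assms(4) by (intro degree_diff_less) auto
    moreover have "\<forall>i\<in>{0..<n}. poly g (\<alpha> i) = 0"
      using hvec_at[OF assms(1)] cf assms(2) by (auto simp: g_def)
    hence "card {0..<n} \<le> degree g" using roots_card[OF g0 assms(1)] by blast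
    ultimately show False by simp
  qed
  define t where "t = hweight n e"
  define G where "G = {i. i < n \<and> e i = 0}"
  define w where "w = (\<lambda>i. poly (hvec \<alpha> u n r) (\<alpha> i))"
  have "G = {0..<n} - {i. i < n \<and> e i \<noteq> 0}" unfolding G_def by auto
  hence Gcard: "card G = n - t" unfolding t_def hweight_def
    by (simp add: card_Diff_subset subset_eq)
  interpret dsetup \<alpha> n k t w f G
  proof
    show "1 \<le> k" "degree f < k" by fact+
    show "2 * t + k \<le> n" using assms(6) assms(4) unfolding t_def by linarith
    show "G \<subseteq> {0..<n}" unfolding G_def by auto
    show "inj_on \<alpha> G" using assms(1) by (rule inj_on_subset) (auto simp: G_def)
    show "card G = n - t" by (rule Gcard)
    show "\<forall>i\<in>G. w i = poly f (\<alpha> i)"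
      using hvec_at[OF assms(1)] cf assms(2,7) by (auto simp: G_def w_def)
  qed
  have "dinv \<alpha> n t w (dinit \<alpha> u n r)"
    unfolding dinit_def dinv_def by (auto simp: w_def eta_facts(1,2) eta_facts(3)[rule_format])
  then obtain m where m: "\<forall>j\<le>m. dinv \<alpha> n t w (dstate_at \<alpha> u n r j)"
    "dstop k (dstate_at \<alpha> u n r m)" "\<forall>j<m. \<not> dstop k (dstate_at \<alpha> u n r j)"
    unfolding dstate_at_def using run by blast
  obtain A B C D where s: "dstate_at \<alpha> u n r m = (A, B, C, D)" by (cases "dstate_at \<alpha> u n r m") auto
  have Bs: "\<forall>j<m. fst (snd (dstate_at \<alpha> u n r j)) \<noteq> 0"
  proof (intro allI impI)
    fix j assume "j < m"
    hence "dinv \<alpha> n t w (dstate_at \<alpha> u n r j)" using m(1) by simp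
    thus "fst (snd (dstate_at \<alpha> u n r j)) \<noteq> 0"
      by (cases "dstate_at \<alpha> u n r j") (auto simp: dinv_def)
  qed
  have fin: "D = - (f * C)" "C \<noteq> 0" using final[of A B C D] m s by auto
  have DC: "D = C * (- f)" using fin by simp
  hence dvd: "C dvd D" by simp
  have "D div C = - f" using DC fin(2) by simp
  hence q: "- (D div C) = f" by simp
  show ?thesis
    using s m(2,3) Bs dvd q hc fk cf by (intro exI[of _ m] exI[of _ A] exI[of _ B] exI[of _ C] exI[of _ D]) auto
qed

end
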